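(* Let $(\mathcal M,X,\bot)$ be a non trivial and accessible concurrent system. Then its characteristic root $r$ satisfies $r<\infty$.
   Context: A trace monoid $\mathcal M=\mathcal M(\Sigma,I)$ is $\langle\Sigma\mid ab=ba\ ((a,b)\in I)\rangle$ with $\Sigma$ finite and $I$ irreflexive symmetric; $|x|$ is trace length. A concurrent system $(\mathcal M,X,\bot)$: $X$ a finite set, $\bot\notin X$, a right action of $\mathcal M$ on $X\cup\{\bot\}$ with $\bot\cdot x=\bot$ for all $x$. Non trivial: there exist a state $\alpha$ and a letter $a$ with $\alpha\cdot a\neq\bot$. Accessible: for all $\alpha,\beta\in X$ there is $x$ with $\alpha\cdot x=\beta$. The characteristic root $r\in(0,+\infty]$ is the minimum over $\alpha,\beta\in X$ of the radius of convergence of $\sum_{n\ge0}\#\{x\in\mathcal M:|x|=n,\ \alpha\cdot x=\beta\}z^n$. *)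

theory Defs
  imports "HOL-Analysis.Analysis"
begin

(* Trace monoid M(S, I): words over S modulo the congruence generated by
   u @ [a,b] @ w ~ u @ [b,a] @ w for (a,b) in I. *)

definition indep_alphabet :: "'a set \<Rightarrow> ('a \<times> 'a) set \<Rightarrow> bool" where
  "indep_alphabet S I \<longleftrightarrow> finite S \<and> I \<subseteq> S \<times> S \<and> irrefl I \<and> sym I"

definition swap_step :: "('a \<times> 'a) set \<Rightarrow> 'a list \<Rightarrow> 'a list \<Rightarrow> bool" where
  "swap_step I v v' \<longleftrightarrow> (\<exists>u w a b. (a, b) \<in> I \<and> v = u @ [a, b] @ w \<and> v' = u @ [b, a] @ w)"

definition trace_rel :: "('a \<times> 'a) set \<Rightarrow> ('a list \<times> 'a list) set" where
  "trace_rel I = {(v, v'). (swap_step I)\<^sup>*\<^sup>* v v'}"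

definition traces_of_length :: "'a set \<Rightarrow> ('a \<times> 'a) set \<Rightarrow> nat \<Rightarrow> 'a list set set" where
  "traces_of_length S I n = {w. set w \<subseteq> S \<and> length w = n} // trace_rel I"

(* States: 'x option, with None playing the role of the sink state \<bottom>.
   The action of a letter on a state is given by delta; \<bottom> . a = \<bottom>. *)
definition step :: "('x \<Rightarrow> 'a \<Rightarrow> 'x option) \<Rightarrow> 'x option \<Rightarrow> 'a \<Rightarrow> 'x option" where
  "step \<delta> s a = (case s of None \<Rightarrow> None | Some x \<Rightarrow> \<delta> x a)"

definition act :: "('x \<Rightarrow> 'a \<Rightarrow> 'x option) \<Rightarrow> 'x option \<Rightarrow> 'a list \<Rightarrow> 'x option" where
  "act \<delta> s w = foldl (step \<delta>) s w"

(* (S,I,X,delta) is a concurrent system: delta induces a right action of the trace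
   monoid M(S,I) on X \<union> {\<bottom>}, i.e. states stay in X \<union> {\<bottom>} and independent letters commute. *)
definition concurrent_system ::
  "'a set \<Rightarrow> ('a \<times> 'a) set \<Rightarrow> 'x set \<Rightarrow> ('x \<Rightarrow> 'a \<Rightarrow> 'x option) \<Rightarrow> bool" where
  "concurrent_system S I X \<delta> \<longleftrightarrow>
     indep_alphabet S I \<and> finite X \<and>
     (\<forall>x\<in>X. \<forall>a\<in>S. \<delta> x a \<in> Some ` X \<union> {None}) \<and>
     (\<forall>x\<in>X. \<forall>(a, b)\<in>I. step \<delta> (step \<delta> (Some x) a) b = step \<delta> (step \<delta> (Some x) b) a)"

definition non_trivial :: "'a set \<Rightarrow> 'x set \<Rightarrow> ('x \<Rightarrow> 'a \<Rightarrow> 'x option) \<Rightarrow> bool" where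
  "non_trivial S X \<delta> \<longleftrightarrow> (\<exists>x\<in>X. \<exists>a\<in>S. \<delta> x a \<noteq> None)"

definition accessible :: "'a set \<Rightarrow> 'x set \<Rightarrow> ('x \<Rightarrow> 'a \<Rightarrow> 'x option) \<Rightarrow> bool" where
  "accessible S X \<delta> \<longleftrightarrow> (\<forall>x\<in>X. \<forall>y\<in>X. \<exists>w. set w \<subseteq> S \<and> act \<delta> (Some x) w = Some y)"

definition count_traces ::
  "'a set \<Rightarrow> ('a \<times> 'a) set \<Rightarrow> ('x \<Rightarrow> 'a \<Rightarrow> 'x option) \<Rightarrow> 'x \<Rightarrow> 'x \<Rightarrow> nat \<Rightarrow> nat" where
  "count_traces S I \<delta> x y n =
     card {t \<in> traces_of_length S I n. \<exists>w\<in>t. act \<delta> (Some x) w = Some y}"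

definition characteristic_root ::
  "'a set \<Rightarrow> ('a \<times> 'a) set \<Rightarrow> 'x set \<Rightarrow> ('x \<Rightarrow> 'a \<Rightarrow> 'x option) \<Rightarrow> ereal" where
  "characteristic_root S I X \<delta> =
     Min {conv_radius (\<lambda>n. real (count_traces S I \<delta> x y n)) | x y. x \<in> X \<and> y \<in> X}"

end

theory Submission
  imports Defs
begin

lemma act_append: "act \<delta> s (u @ v) = act \<delta> (act \<delta> s u) v"
  by (simp add: act_def)

lemma act_loop:
  assumes "act \<delta> (Some x) u = Some x"
  shows "act \<delta> (Some x) (concat (replicate k u)) = Some x"
  by (induction k) (auto simp: act_append assms, simp add: act_def)

lemma count_pos:
  assumes fin: "finite S" and w: "set w \<subseteq> S" and a: "act \<delta> (Some x) w = Some y"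
  shows "count_traces S I \<delta> x y (length w) \<ge> 1"
proof -
  let ?A = "{v. set v \<subseteq> S \<and> length v = length w}"
  have fA: "finite ?A" using finite_lists_length_eq[OF fin] .
  have "finite (traces_of_length S I (length w))"
    unfolding traces_of_length_def quotient_def using fA by auto
  moreover have "trace_rel I `` {w} \<in> traces_of_length S I (length w)"
    unfolding traces_of_length_def by (rule quotientI) (use w in auto)
  moreover have "w \<in> trace_rel I `` {w}" by (simp add: trace_rel_def)
  ultimately have "trace_rel I `` {w} \<in> {t \<in> traces_of_length S I (length w). \<exists>w\<in>t. act \<delta> (Some x) w = Some y}"
    and "finite {t \<in> traces_of_length S I (length w). \<exists>w\<in>t. act \<delta> (Some x) w = Some y}"
    using a by auto
  then have "card {t \<in> traces_of_length S I (length w). \<exists>w\<in>t. act \<delta> (Some x) w = Some y} > 0"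
    by (auto simp: card_gt_0_iff)
  then show ?thesis unfolding count_traces_def by simp
qed

lemma conv_le1:
  fixes f :: "nat \<Rightarrow> real"
  assumes L: "L > 0" and f: "\<And>k. f (k * L) \<ge> 1"
  shows "conv_radius f \<le> 1"
proof -
  have "\<not> summable (\<lambda>n. f n * 1 ^ n)"
  proof
    assume "summable (\<lambda>n. f n * 1 ^ n)"
    then have "f \<longlonglongrightarrow> 0" using summable_LIMSEQ_zero by simp
    then have "\<forall>\<^sub>F n in sequentially. norm (f n) < 1"
      using order_tendstoD(2)[OF tendsto_norm_zero, of f sequentially 1] by simp
    then obtain N where N: "\<And>n. n \<ge> N \<Longrightarrow> norm (f n) < 1"
      by (auto simp: eventually_sequentially)
    have "N * L \<ge> N" using L by simp
    from N[OF this] f[of N] show False by simp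
  qed
  from conv_radius_leI'[OF this] show ?thesis by (simp add: one_ereal_def)
qed

theorem proposition2:
  fixes S :: "'a set" and I :: "('a \<times> 'a) set" and X :: "'x set"
    and \<delta> :: "'x \<Rightarrow> 'a \<Rightarrow> 'x option"
  assumes "concurrent_system S I X \<delta>"
    and "non_trivial S X \<delta>"
    and "accessible S X \<delta>"
  shows "characteristic_root S I X \<delta> < \<infinity>"
proof -
  from assms(1) have finS: "finite S" and finX: "finite X"
    and cl: "\<forall>x\<in>X. \<forall>a\<in>S. \<delta> x a \<in> Some ` X \<union> {None}"
    unfolding concurrent_system_def indep_alphabet_def by blast+
  from assms(2) obtain x a where x: "x \<in> X" and a: "a \<in> S" and na: "\<delta> x a \<noteq> None"
    unfolding non_trivial_def by blast
  have "\<delta> x a \<in> Some ` X \<union> {None}" using cl x a by blast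
  with na obtain y where y: "y \<in> X" and dy: "\<delta> x a = Some y" by auto
  from assms(3) y x obtain w where w: "set w \<subseteq> S" "act \<delta> (Some y) w = Some x"
    unfolding accessible_def by blast
  define u where "u = a # w"
  have uS: "set u \<subseteq> S" using w a by (simp add: u_def)
  have ux: "act \<delta> (Some x) u = Some x"
    using w dy by (simp add: u_def act_def step_def)
  define L where "L = length u"
  have L: "L > 0" by (simp add: L_def u_def)
  have "\<And>k. real (count_traces S I \<delta> x x (k * L)) \<ge> 1"
  proof -
    fix k
    have "count_traces S I \<delta> x x (length (concat (replicate k u))) \<ge> 1"
      by (rule count_pos[OF finS]) (use uS act_loop[OF ux] in auto)
    moreover have "length (concat (replicate k u)) = k * L"
      by (simp add: L_def length_concat sum_list_replicate)
    ultimately show "real (count_traces S I \<delta> x x (k * L)) \<ge> 1" by simp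
  qed
  from conv_le1[where f="\<lambda>n. real (count_traces S I \<delta> x x n)", OF L this] have c1: "conv_radius (\<lambda>n. real (count_traces S I \<delta> x x n)) \<le> 1" .
  let ?M = "{conv_radius (\<lambda>n. real (count_traces S I \<delta> x y n)) | x y. x \<in> X \<and> y \<in> X}"
  have "finite ?M"
  proof -
    have "?M = (\<lambda>(x,y). conv_radius (\<lambda>n. real (count_traces S I \<delta> x y n))) ` (X \<times> X)"
      by (auto simp del: count_traces_def)
    then show ?thesis using finX by simp
  qed
  moreover have "conv_radius (\<lambda>n. real (count_traces S I \<delta> x x n)) \<in> ?M" using x by blast
  ultimately have "characteristic_root S I X \<delta> \<le> 1"
    unfolding characteristic_root_def using c1 by (rule order_trans[OF Min_le])
  moreover have "(1::ereal) < \<infinity>" by simp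
  ultimately show ?thesis by (rule le_less_trans)
qed

end
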